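(* Let $n\ge 1$ and let $B\in\mathbb{R}^{n\times n}$ satisfy $B_{ij}\ge 0$ and $\sum_{j=1}^n B_{ij}\le 1$ for all $i,j$. Let $b\in\mathbb{R}^n$ be given by $b_i=1-\sum_{j=1}^n B_{ij}$, let $\zeta=\frac{1}{n^2}\sum_{i,j}\mathbb{1}(B_{ij}>0)$, let $R=\sum_{k=1}^\infty \operatorname{tr}\!\left(\frac{B^{2k}}{\zeta^k n^k}\right)$, let $r$ be the rank of $B^2$, and let $\mu_i=\frac{1}{n}\sum_{k=1}^n B_{ik}$ be the mean of the $i$-th row of $B$. Assume $\zeta n>\rho(B^2)$. Then $$R\le \frac{\sqrt{r}\left(\sum_{i=1}^n\sum_{j=1}^n (B_{ij}-\mu_i)^2+\sum_{i=1}^n(1-b_i)^2\right)}{\sigma_n(\zeta n I-B^2)}.$$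
   Context: $B$ is the sub-transition matrix of a Markov generation model over $n$ words, whose full transition matrix on $n+1$ states (the last an absorbing end-of-sentence state) is $\begin{bmatrix}B & b\\ 0&1\end{bmatrix}$. $\mathbb{1}(\cdot)$ is the indicator function, $\rho(\cdot)$ the spectral radius, $\sigma_n(\cdot)$ the smallest singular value, $I$ the $n\times n$ identity matrix. *)

theory Defs
  imports "HOL-Analysis.Analysis"
begin

primrec matpow :: "real^'n^'n \<Rightarrow> nat \<Rightarrow> real^'n^'n" where
  "matpow A 0 = mat 1"
| "matpow A (Suc k) = A ** matpow A k"

definition complex_eigenvalues :: "real^'n^'n \<Rightarrow> complex set" where
  "complex_eigenvalues A =
     {l. \<exists>v::complex^'n. v \<noteq> 0 \<and>
          (\<chi> i j. complex_of_real (A $ i $ j)) *v v = l *s v}"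

definition spectral_radius :: "real^'n^'n \<Rightarrow> real" where
  "spectral_radius A = Sup (cmod ` complex_eigenvalues A)"

definition smallest_singular_value :: "real^'n^'n \<Rightarrow> real" where
  "smallest_singular_value M =
     sqrt (Inf {l::real. \<exists>v::real^'n. v \<noteq> 0 \<and> (transpose M ** M) *v v = l *\<^sub>R v})"

end

theory Submission
  imports Defs "Jordan_Normal_Form.Spectral_Radius"
begin

no_notation Matrix.vec_index (infixl \<open>$\<close> 100)

lemma matpow_Suc': "matpow A (Suc k) = matpow A k ** A"
  by (induction k) (simp_all add: matrix_mul_assoc)




lemma jnf_bounded_powers:
  fixes P :: "real^'n^'n"
  assumes ev: "\<And>l. l \<in> complex_eigenvalues P \<Longrightarrow> cmod l < 1"
  shows "\<exists>c. \<forall>k i j. \<bar>matpow P k $ i $ j\<bar> \<le> c"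
proof -
  define n where "n = CARD('n)"
  obtain f where bij: "bij_betw f {0..<n} (UNIV::'n set)"
    using ex_bij_betw_nat_finite[of "UNIV::'n set"] unfolding n_def by auto
  define cm :: "real^'n^'n \<Rightarrow> complex Matrix.mat" where
    "cm A = Matrix.mat n n (\<lambda>(i,j). complex_of_real (A $ f i $ f j))" for A
  have cm_carr: "cm A \<in> carrier_mat n n" for A by (simp add: cm_def)
  have sumre: "(\<Sum>k<n. g (f k)) = (\<Sum>m\<in>UNIV. g m)" for g :: "'n \<Rightarrow> complex"
    using sum.reindex_bij_betw[OF bij, of g] by (simp add: atLeast0LessThan)
  have cm_mult: "cm (A ** C) = cm A * cm C" for A C
  proof (rule eq_matI)
    fix i j assume ij: "i < dim_row (cm A * cm C)" "j < dim_col (cm A * cm C)"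
    hence i: "i < n" and j: "j < n" by (auto simp: cm_def)
    have "(cm A * cm C) $$ (i, j) = (\<Sum>k<n. complex_of_real (A $ f i $ f k) * complex_of_real (C $ f k $ f j))"
      using i j by (simp add: cm_def scalar_prod_def atLeast0LessThan)
    also have "\<dots> = (\<Sum>m\<in>UNIV. complex_of_real (A $ f i $ m) * complex_of_real (C $ m $ f j))"
      by (rule sumre)
    also have "\<dots> = cm (A ** C) $$ (i, j)"
      using i j by (simp add: cm_def matrix_matrix_mult_def)
    finally show "cm (A ** C) $$ (i, j) = (cm A * cm C) $$ (i, j)" by simp
  qed (auto simp: cm_def)
  have f_inj: "f i = f j \<Longrightarrow> i < n \<Longrightarrow> j < n \<Longrightarrow> i = j" for i j
    using bij unfolding bij_betw_def inj_on_def by auto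
  have cm_one: "cm (Finite_Cartesian_Product.mat 1) = 1\<^sub>m n"
    by (rule eq_matI) (auto simp: cm_def Finite_Cartesian_Product.mat_def f_inj)
  have cm_pow: "cm (matpow A k) = cm A ^\<^sub>m k" for A k
  proof (induction k)
    case 0 then show ?case using cm_one by (simp add: cm_def)
  next
    case (Suc k) then show ?case by (simp del: matpow.simps add: matpow_Suc' cm_mult)
  qed
  have transfer: "l \<in> complex_eigenvalues P" if "eigenvalue (cm P) l" for l
  proof -
    from that obtain v where v: "v \<in> carrier_vec n" "v \<noteq> 0\<^sub>v n" "cm P *\<^sub>v v = l \<cdot>\<^sub>v v"
      unfolding eigenvalue_def eigenvector_def by (auto simp: cm_def)
    define g where "g = inv_into {0..<n} f"
    have fg: "f (g m) = m" for m using bij unfolding g_def by (meson UNIV_I bij_betw_inv_into_right)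
    have gf: "i < n \<Longrightarrow> g (f i) = i" for i using bij unfolding g_def
      by (simp add: bij_betw_inv_into_left)
    have gn: "g m < n" for m using bij unfolding g_def
      by (metis UNIV_I atLeastLessThan_iff bij_betw_def inv_into_into)
    define w :: "complex^'n" where "w = (\<chi> m. vec_index v (g m))"
    have "w \<noteq> 0"
    proof
      assume w0: "w = 0"
      have "v = 0\<^sub>v n"
      proof (rule eq_vecI)
        fix i assume "i < dim_vec (0\<^sub>v n :: complex Matrix.vec)"
        hence i: "i < n" by simp
        have "w $ f i = 0" using w0 by simp
        then show "vec_index v i = vec_index (0\<^sub>v n) i" using i gf by (simp add: w_def)
      qed (use v in auto)
      with v show False by simp
    qed
    moreover have "(\<chi> i j. complex_of_real (P $ i $ j)) *v w = l *s w"
    proof (rule Finite_Cartesian_Product.vec_eq_iff[THEN iffD2, rule_format])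
      fix m
      have "vec_index (cm P *\<^sub>v v) (g m) = (\<Sum>k<n. complex_of_real (P $ f (g m) $ f k) * vec_index v k)"
        using gn v(1) by (simp add: cm_def scalar_prod_def atLeast0LessThan row_def)
      also have "\<dots> = (\<Sum>k<n. complex_of_real (P $ m $ f k) * w $ f k)"
        by (rule sum.cong) (auto simp: fg w_def gf)
      also have "\<dots> = (\<Sum>j\<in>UNIV. complex_of_real (P $ m $ j) * w $ j)"
        by (rule sumre)
      finally have "((\<chi> i j. complex_of_real (P $ i $ j)) *v w) $ m = vec_index (cm P *\<^sub>v v) (g m)"
        by (simp add: matrix_vector_mult_def)
      also have "\<dots> = l * vec_index v (g m)" using v gn by simp
      finally show "((\<chi> i j. complex_of_real (P $ i $ j)) *v w) $ m = (l *s w) $ m"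
        by (simp add: w_def)
    qed
    ultimately show ?thesis unfolding complex_eigenvalues_def by blast
  qed
  have n0: "n > 0" unfolding n_def by simp
  have "Spectral_Radius.spectral_radius (cm P) < 1"
  proof -
    from spectral_radius_mem_max(1)[OF cm_carr n0, of P]
    obtain l where "l \<in> spectrum (cm P)" "Spectral_Radius.spectral_radius (cm P) = norm l" by auto
    then show ?thesis using ev transfer unfolding spectrum_def by auto
  qed
  from spectral_radius_jnf_norm_bound_less_1_upper_triangular[OF cm_carr this]
  obtain c where c: "\<And>k. norm_bound (cm P ^\<^sub>m k) c" by auto
  show ?thesis
  proof (intro exI allI)
    fix k i j
    obtain i' where i': "i' < n" "f i' = i" using bij by (metis UNIV_I atLeastLessThan_iff bij_betw_iff_bijections)
    obtain j' where j': "j' < n" "f j' = j" using bij by (metis UNIV_I atLeastLessThan_iff bij_betw_iff_bijections)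
    have "norm (cm (matpow P k) $$ (i', j')) \<le> c"
      using c[of k] i' j' cm_carr[of P] unfolding norm_bound_def cm_pow by auto
    then show "\<bar>matpow P k $ i $ j\<bar> \<le> c" using i' j' by (simp add: cm_def)
  qed
qed


hide_const (open) Matrix.mat Spectral_Radius.spectral_radius Matrix.orthogonal VectorSpace.subspace
no_notation Matrix.scalar_prod (infix \<open>\<bullet>\<close> 70)




lemma matpow_scale: "matpow (c *\<^sub>R A) k = (c ^ k) *\<^sub>R matpow A k"
  by (induction k) (simp_all add: scalar_matrix_assoc[symmetric] matrix_scalar_ac)

lemma ceig_bdd: "bdd_above (cmod ` complex_eigenvalues (P::real^'n^'n))"
proof -
  define K where "K = (\<Sum>i\<in>UNIV. \<Sum>j\<in>UNIV. \<bar>P $ i $ j\<bar>)"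
  have "cmod l \<le> K" if "l \<in> complex_eigenvalues P" for l
  proof -
    from that obtain v :: "complex^'n" where v0: "v \<noteq> 0"
      and ev: "(\<chi> i j. complex_of_real (P $ i $ j)) *v v = l *s v"
      unfolding complex_eigenvalues_def by blast
    define m where "m = Max (range (\<lambda>j. cmod (v $ j)))"
    have fr: "finite (range (\<lambda>j. cmod (v $ j)))" by simp
    have "m \<in> range (\<lambda>j. cmod (v $ j))" unfolding m_def by (rule Max_in[OF fr]) simp
    then obtain i where i: "m = cmod (v $ i)" by blast
    have mx: "cmod (v $ j) \<le> cmod (v $ i)" for j
    proof -
      have "cmod (v $ j) \<le> m" unfolding m_def by (rule Max_ge[OF fr]) (rule rangeI)
      then show ?thesis using i by simp
    qed
    have vi: "v $ i \<noteq> 0"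
    proof
      assume "v $ i = 0"
      then have "v $ j = 0" for j using mx[of j] by simp
      then have "v = 0" by (simp add: Finite_Cartesian_Product.vec_eq_iff)
      with v0 show False by simp
    qed
    have "l * v $ i = (\<Sum>j\<in>UNIV. complex_of_real (P $ i $ j) * v $ j)"
      using arg_cong[OF ev, of "\<lambda>x. x $ i"] by (simp add: matrix_vector_mult_def)
    then have "cmod l * cmod (v $ i) = cmod (\<Sum>j\<in>UNIV. complex_of_real (P $ i $ j) * v $ j)"
      by (metis norm_mult)
    also have "\<dots> \<le> (\<Sum>j\<in>UNIV. cmod (complex_of_real (P $ i $ j) * v $ j))"
      by (rule norm_sum)
    also have "\<dots> = (\<Sum>j\<in>UNIV. \<bar>P $ i $ j\<bar> * cmod (v $ j))"
      by (simp add: norm_mult)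
    also have "\<dots> \<le> (\<Sum>j\<in>UNIV. \<bar>P $ i $ j\<bar> * cmod (v $ i))"
      by (intro sum_mono mult_left_mono mx) simp
    also have "\<dots> = (\<Sum>j\<in>UNIV. \<bar>P $ i $ j\<bar>) * cmod (v $ i)"
      by (simp add: sum_distrib_right)
    finally have "cmod l * cmod (v $ i) \<le> (\<Sum>j\<in>UNIV. \<bar>P $ i $ j\<bar>) * cmod (v $ i)" .
    then have "cmod l \<le> (\<Sum>j\<in>UNIV. \<bar>P $ i $ j\<bar>)" using vi by simp
    also have "\<dots> \<le> K" unfolding K_def
      by (rule member_le_sum[where f="\<lambda>i. \<Sum>j\<in>UNIV. \<bar>P $ i $ j\<bar>"]) (simp_all add: sum_nonneg)
    finally show ?thesis .
  qed
  then show ?thesis by (intro bdd_aboveI2) blast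
qed

lemma ceig_scale:
  fixes P :: "real^'n^'n"
  assumes "c \<noteq> 0" "l \<in> complex_eigenvalues (c *\<^sub>R P)"
  shows "l / complex_of_real c \<in> complex_eigenvalues P"
proof -
  from assms obtain v :: "complex^'n" where v0: "v \<noteq> 0"
      and ev: "(\<chi> i j. complex_of_real ((c *\<^sub>R P) $ i $ j)) *v v = l *s v"
      unfolding complex_eigenvalues_def by auto
  have "(\<chi> i j. complex_of_real (P $ i $ j)) *v v = (l / complex_of_real c) *s v"
  proof (rule Finite_Cartesian_Product.vec_eq_iff[THEN iffD2, rule_format])
    fix i
    have "complex_of_real c * (\<Sum>j\<in>UNIV. complex_of_real (P $ i $ j) * v $ j) = l * v $ i"
      using arg_cong[OF ev, of "\<lambda>x. x $ i"]
      by (simp add: matrix_vector_mult_def sum_distrib_left mult.assoc)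
    then show "((\<chi> i j. complex_of_real (P $ i $ j)) *v v) $ i = ((l / complex_of_real c) *s v) $ i"
      using assms(1) by (simp add: matrix_vector_mult_def field_simps)
  qed
  with v0 show ?thesis unfolding complex_eigenvalues_def by blast
qed

lemma powers_to_zero:
  fixes P :: "real^'n^'n"
  assumes le: "\<And>l. l \<in> complex_eigenvalues P \<Longrightarrow> cmod l \<le> \<rho>" and lt: "\<rho> < s" and s0: "s > 0"
  shows "((\<lambda>k. matpow ((1/s) *\<^sub>R P) k $ i $ j) \<longlongrightarrow> 0) sequentially"
proof -
  define q where "q = max ((\<rho> + s) / 2) (s / 2)"
  have q: "q > 0" "q < s" "\<rho> < q" using lt s0 unfolding q_def by (auto simp: max_def)
  have "cmod l < 1" if "l \<in> complex_eigenvalues ((1/q) *\<^sub>R P)" for l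
  proof -
    from ceig_scale[OF _ that] q have "l * complex_of_real q \<in> complex_eigenvalues P" by simp
    from le[OF this] q have "cmod l * q \<le> \<rho>" by (simp add: norm_mult)
    with q show ?thesis by (smt (verit, best) mult_le_cancel_right1)
  qed
  from jnf_bounded_powers[OF this] obtain c where c: "\<And>k i j. \<bar>matpow ((1/q) *\<^sub>R P) k $ i $ j\<bar> \<le> c" by blast
  have eq: "matpow ((1/s) *\<^sub>R P) k = (q/s)^k *\<^sub>R matpow ((1/q) *\<^sub>R P) k" for k
  proof -
    have "(1/s) *\<^sub>R P = (q/s) *\<^sub>R ((1/q) *\<^sub>R P)" using q by simp
    moreover have "(1/s) ^ k = (q / s) ^ k * (1 / q) ^ k" using q by (simp add: power_mult_distrib[symmetric])
    ultimately show ?thesis by (simp add: matpow_scale)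
  qed
  have g: "((\<lambda>k. (q/s)^k * c) \<longlongrightarrow> 0) sequentially"
    using q by (intro tendsto_mult_left_zero LIMSEQ_power_zero) auto
  show ?thesis
  proof (rule Lim_null_comparison[OF _ g], rule always_eventually, rule allI)
    fix k
    have "norm (matpow ((1/s) *\<^sub>R P) k $ i $ j) = (q/s)^k * \<bar>matpow ((1/q) *\<^sub>R P) k $ i $ j\<bar>"
      using q by (simp add: eq abs_mult)
    also have "\<dots> \<le> (q/s)^k * c" using q c by (intro mult_left_mono) auto
    finally show "norm (matpow ((1/s) *\<^sub>R P) k $ i $ j) \<le> (q/s)^k * c" .
  qed
qed



lemma quad_zero:
  fixes a b :: real
  assumes "\<And>t. 0 \<le> 2 * t * a + t\<^sup>2 * b"
  shows "a = 0"
proof -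
  define t where "t = - a / (\<bar>b\<bar> + 1)"
  have pos: "\<bar>b\<bar> + 1 > 0" by simp
  have "0 \<le> 2 * t * a + t\<^sup>2 * b" by (rule assms)
  then have "0 \<le> (2 * t * a + t\<^sup>2 * b) * (\<bar>b\<bar> + 1)^2" by simp
  also have "\<dots> = 2 * a * (t * (\<bar>b\<bar> + 1)) * (\<bar>b\<bar> + 1) + (t * (\<bar>b\<bar> + 1))\<^sup>2 * b"
    by (simp add: power2_eq_square algebra_simps)
  also have "t * (\<bar>b\<bar> + 1) = - a" unfolding t_def using pos by simp
  also have "2 * a * (- a) * (\<bar>b\<bar> + 1) + (- a)\<^sup>2 * b = a\<^sup>2 * (b - 2 * (\<bar>b\<bar> + 1))"
    by (simp add: power2_eq_square algebra_simps)
  finally have "0 \<le> a\<^sup>2 * (b - 2 * (\<bar>b\<bar> + 1))" .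
  moreover have "b - 2 * (\<bar>b\<bar> + 1) < 0" by (cases "b \<ge> 0") auto
  ultimately have "a\<^sup>2 \<le> 0" by (smt (verit) mult_pos_neg zero_less_power2)
  then show ?thesis by simp
qed

lemma ssv_bound:
  fixes M :: "real^'n^'n"
  assumes inj: "\<And>v. M *v v = 0 \<Longrightarrow> v = 0"
  shows "smallest_singular_value M > 0" "\<And>w. smallest_singular_value M * norm w \<le> norm (M *v w)"
proof -
  define f where "f w = (norm (M *v w))\<^sup>2" for w :: "real^'n"
  have cont: "continuous_on (sphere 0 1) f" unfolding f_def
    by (intro continuous_intros linear_continuous_on bounded_linear_intros
        matrix_vector_mul_bounded_linear)
  obtain i :: 'n where True by blast
  have ne: "sphere (0::real^'n) 1 \<noteq> {}" using norm_axis_1[of i] by (metis mem_sphere_0 empty_iff)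
  from continuous_attains_inf[OF compact_sphere ne cont]
  obtain w0 where w0: "norm w0 = 1" "\<And>y. norm y = 1 \<Longrightarrow> f w0 \<le> f y" by auto
  define \<mu> where "\<mu> = f w0"
  have low: "\<mu> * (norm x)\<^sup>2 \<le> (norm (M *v x))\<^sup>2" for x
  proof (cases "x = 0")
    case False
    then have nx: "norm x > 0" by simp
    have "\<mu> \<le> f ((1 / norm x) *\<^sub>R x)" unfolding \<mu>_def using nx by (intro w0(2)) simp
    also have "\<dots> = (norm (M *v x))\<^sup>2 / (norm x)\<^sup>2"
      unfolding f_def using nx by (simp add: matrix_vector_mult_scaleR power_divide)
    finally show ?thesis using nx by (simp add: field_simps)
  qed simp
  have mu0: "\<mu> > 0"
  proof -
    have "w0 \<noteq> 0" using w0 by auto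
    then have "M *v w0 \<noteq> 0" using inj by blast
    then show ?thesis unfolding \<mu>_def f_def by simp
  qed
  have eig: "(transpose M ** M) *v w0 = \<mu> *\<^sub>R w0"
  proof -
    have a0: "(M *v w0) \<bullet> (M *v y) - \<mu> * (w0 \<bullet> y) = 0" for y
    proof (rule quad_zero)
      fix t :: real
      have "\<mu> * (norm (w0 + t *\<^sub>R y))\<^sup>2 \<le> (norm (M *v (w0 + t *\<^sub>R y)))\<^sup>2" by (rule low)
      moreover have "(norm (w0 + t *\<^sub>R y))\<^sup>2 = 1 + 2 * t * (w0 \<bullet> y) + t\<^sup>2 * (y \<bullet> y)"
      proof -
        have ww: "w0 \<bullet> w0 = 1" using w0(1) by (metis norm_eq_1)
        show ?thesis unfolding power2_norm_eq_inner
          by (simp add: inner_add_left inner_add_right ww inner_commute power2_eq_square algebra_simps)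
      qed
      moreover have "(norm (M *v (w0 + t *\<^sub>R y)))\<^sup>2 = \<mu> + 2 * t * ((M *v w0) \<bullet> (M *v y)) + t\<^sup>2 * ((M *v y) \<bullet> (M *v y))"
        unfolding \<mu>_def f_def power2_norm_eq_inner
        by (simp add: matrix_vector_right_distrib matrix_vector_mult_scaleR
            inner_add_left inner_add_right inner_commute power2_eq_square algebra_simps)
      ultimately have "0 \<le> 2 * t * ((M *v w0) \<bullet> (M *v y) - \<mu> * (w0 \<bullet> y)) + t\<^sup>2 * ((M *v y) \<bullet> (M *v y) - \<mu> * (y \<bullet> y))"
        by (simp add: algebra_simps)
      then show "0 \<le> 2 * t * ((M *v w0) \<bullet> (M *v y) - \<mu> * (w0 \<bullet> y)) + t\<^sup>2 * ((M *v y) \<bullet> (M *v y) - \<mu> * (y \<bullet> y))" .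
    qed
    have tr: "(M *v w0) \<bullet> (M *v y) = ((transpose M ** M) *v w0) \<bullet> y" for y
      by (metis dot_lmul_matrix matrix_vector_mul_assoc transpose_matrix_vector)
    define d where "d = (transpose M ** M) *v w0 - \<mu> *\<^sub>R w0"
    have "d \<bullet> d = 0" using a0[of d] tr[of d] unfolding d_def by (simp add: inner_diff_left)
    then show ?thesis unfolding d_def by simp
  qed
  define E where "E = {l::real. \<exists>v::real^'n. v \<noteq> 0 \<and> (transpose M ** M) *v v = l *\<^sub>R v}"
  have "\<mu> \<in> E" unfolding E_def using eig w0(1) by (intro CollectI exI[of _ w0]) auto
  moreover have "\<mu> \<le> l" if "l \<in> E" for l
  proof -
    from that obtain v where v: "v \<noteq> 0" "(transpose M ** M) *v v = l *\<^sub>R v" unfolding E_def by auto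
    have "(norm (M *v v))\<^sup>2 = v \<bullet> ((transpose M ** M) *v v)"
      by (metis dot_lmul_matrix matrix_vector_mul_assoc power2_norm_eq_inner transpose_matrix_vector inner_commute)
    also have "\<dots> = l * (norm v)\<^sup>2" using v by (simp add: power2_norm_eq_inner)
    finally have "\<mu> * (norm v)\<^sup>2 \<le> l * (norm v)\<^sup>2" using low[of v] by simp
    then show ?thesis using v by simp
  qed
  ultimately have InfE: "Inf E = \<mu>" by (intro cInf_eq_minimum)
  have ssv: "smallest_singular_value M = sqrt \<mu>"
    unfolding smallest_singular_value_def InfE[symmetric] E_def ..
  show "smallest_singular_value M > 0" using ssv mu0 by simp
  show "smallest_singular_value M * norm w \<le> norm (M *v w)" for w
  proof -
    have "(sqrt \<mu> * norm w)\<^sup>2 \<le> (norm (M *v w))\<^sup>2" using low[of w] mu0 by (simp add: power_mult_distrib)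
    then show ?thesis using ssv mu0 by (simp add: power2_le_iff_abs_le abs_le_square_iff)
  qed
qed



lemma onb_expand:
  fixes U :: "'a::euclidean_space set"
  assumes orth: "pairwise orthogonal U" and nrm: "\<And>u. u \<in> U \<Longrightarrow> norm u = 1"
    and y: "y \<in> span U"
  shows "y = (\<Sum>u\<in>U. (u \<bullet> y) *\<^sub>R u)"
proof -
  have fin: "finite U" using orth pairwise_orthogonal_imp_finite by blast
  have uu: "u \<bullet> u = 1" if "u \<in> U" for u using nrm[OF that] by (metis norm_eq_1)
  have sum_eq: "(\<Sum>b\<in>U. (b \<bullet> y / (b \<bullet> b)) *\<^sub>R b) = (\<Sum>u\<in>U. (u \<bullet> y) *\<^sub>R u)"
    by (rule sum.cong) (auto simp: uu)
  define d where "d = y - (\<Sum>u\<in>U. (u \<bullet> y) *\<^sub>R u)"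
  have "d \<in> span U" unfolding d_def
    by (intro span_diff y span_sum span_mul span_base) auto
  from Gram_Schmidt_step[OF orth this, of y]
  have "orthogonal d d" unfolding sum_eq d_def[symmetric] .
  then have "d = 0" by (simp add: orthogonal_self)
  then show ?thesis unfolding d_def by simp
qed

lemma trace_bound:
  fixes P Minv :: "real^'n^'n" and \<sigma> :: real
  assumes s0: "\<sigma> > 0" and sM: "\<And>u. \<sigma> * norm (Minv *v u) \<le> norm u"
  shows "trace (Minv ** P) \<le> sqrt (real (rank P)) * sqrt (\<Sum>i\<in>UNIV. \<Sum>j\<in>UNIV. (P$i$j)^2) / \<sigma>"
proof -
  define S where "S = range (\<lambda>x. P *v x)"
  have "subspace S" unfolding S_def
    by (intro linear_subspace_image subspace_UNIV matrix_vector_mul_linear)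
  then obtain U where U: "U \<subseteq> S" "pairwise orthogonal U" "\<And>x. x \<in> U \<Longrightarrow> norm x = 1"
    "independent U" "card U = dim S" "span U = S"
    by (rule orthonormal_basis_subspace) blast+
  have fin: "finite U" using U(2) pairwise_orthogonal_imp_finite by blast
  have cardU: "card U = rank P" unfolding U(5) S_def rank_dim_range ..
  have exp: "y = (\<Sum>u\<in>U. (u \<bullet> y) *\<^sub>R u)" if "y \<in> S" for y
    using onb_expand[OF U(2) U(3)] that U(6) by blast
  have parseval: "(\<Sum>u\<in>U. (u \<bullet> y)\<^sup>2) = y \<bullet> y" if "y \<in> S" for y
  proof -
    have "y \<bullet> y = y \<bullet> (\<Sum>u\<in>U. (u \<bullet> y) *\<^sub>R u)" using exp[OF that] by simp
    also have "\<dots> = (\<Sum>u\<in>U. (u \<bullet> y)\<^sup>2)"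
      by (simp add: inner_sum_right inner_commute power2_eq_square)
    finally show ?thesis by simp
  qed
  define Y where "Y = P ** Minv"
  have colS: "column i Y \<in> S" for i
  proof -
    have "column i Y = P *v (Minv *v axis i 1)"
      unfolding Y_def matrix_vector_mult_basis[symmetric] by (simp add: matrix_vector_mul_assoc)
    then show ?thesis unfolding S_def by simp
  qed
  have colP: "column j P \<in> S" for j
    unfolding S_def matrix_vector_mult_basis[symmetric] by simp
  have "trace (Minv ** P) = trace Y" unfolding Y_def by (rule trace_mul_sym)
  also have "\<dots> = (\<Sum>i\<in>UNIV. column i Y $ i)" unfolding trace_def by (simp add: column_def)
  also have "\<dots> = (\<Sum>i\<in>UNIV. \<Sum>u\<in>U. (u \<bullet> column i Y) * u $ i)"
  proof (rule sum.cong[OF refl])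
    fix i
    have "column i Y $ i = (\<Sum>u\<in>U. (u \<bullet> column i Y) *\<^sub>R u) $ i" using exp[OF colS[of i]] by simp
    then show "column i Y $ i = (\<Sum>u\<in>U. (u \<bullet> column i Y) * u $ i)" by (simp add: sum_component)
  qed
  also have "\<dots> = (\<Sum>u\<in>U. \<Sum>i\<in>UNIV. (u \<bullet> column i Y) * u $ i)" by (rule sum.swap)
  also have "\<dots> = (\<Sum>u\<in>U. u \<bullet> (Y *v u))"
  proof (rule sum.cong[OF refl])
    fix u :: "real^'n"
    have "(\<Sum>i\<in>UNIV. (u \<bullet> column i Y) * u $ i) = (\<Sum>i\<in>UNIV. \<Sum>k\<in>UNIV. u $ k * Y $ k $ i * u $ i)"
      by (simp add: inner_vec_def column_def sum_distrib_right)
    also have "\<dots> = (\<Sum>k\<in>UNIV. \<Sum>i\<in>UNIV. u $ k * Y $ k $ i * u $ i)" by (rule sum.swap)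
    also have "\<dots> = u \<bullet> (Y *v u)"
      by (simp add: inner_vec_def matrix_vector_mult_def sum_distrib_left mult.assoc)
    finally show "(\<Sum>i\<in>UNIV. (u \<bullet> column i Y) * u $ i) = u \<bullet> (Y *v u)" .
  qed
  also have "\<dots> \<le> (\<Sum>u\<in>U. norm (transpose P *v u) / \<sigma>)"
  proof (rule sum_mono)
    fix u assume uU: "u \<in> U"
    have "u \<bullet> (Y *v u) = (transpose P *v u) \<bullet> (Minv *v u)"
      unfolding Y_def transpose_matrix_vector dot_lmul_matrix by (simp add: matrix_vector_mul_assoc)
    also have "\<dots> \<le> norm (transpose P *v u) * norm (Minv *v u)" by (rule norm_cauchy_schwarz)
    also have "\<dots> \<le> norm (transpose P *v u) * (1 / \<sigma>)"
    proof (rule mult_left_mono)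
      show "norm (Minv *v u) \<le> 1 / \<sigma>" using sM[of u] U(3)[OF uU] s0 by (simp add: field_simps mult.commute)
    qed simp
    finally show "u \<bullet> (Y *v u) \<le> norm (transpose P *v u) / \<sigma>" by simp
  qed
  also have "\<dots> = (\<Sum>u\<in>U. norm (transpose P *v u)) / \<sigma>" by (simp add: sum_divide_distrib)
  also have "(\<Sum>u\<in>U. norm (transpose P *v u)) \<le> sqrt (real (card U)) * sqrt (\<Sum>u\<in>U. (norm (transpose P *v u))\<^sup>2)"
  proof -
    have "(\<Sum>u\<in>U. norm (transpose P *v u))\<^sup>2 \<le> (\<Sum>u\<in>U. (norm (transpose P *v u))\<^sup>2) * real (card U)"
      by (rule sum_squared_le_sum_of_squares)
    then have "sqrt ((\<Sum>u\<in>U. norm (transpose P *v u))\<^sup>2) \<le> sqrt ((\<Sum>u\<in>U. (norm (transpose P *v u))\<^sup>2) * real (card U))"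
      by (rule real_sqrt_le_mono)
    then show ?thesis by (simp add: real_sqrt_mult mult.commute)
  qed
  also have "(\<Sum>u\<in>U. (norm (transpose P *v u))\<^sup>2) = (\<Sum>i\<in>UNIV. \<Sum>j\<in>UNIV. (P$i$j)^2)"
  proof -
    have "(\<Sum>u\<in>U. (norm (transpose P *v u))\<^sup>2) = (\<Sum>u\<in>U. \<Sum>j\<in>UNIV. (u \<bullet> column j P)\<^sup>2)"
    proof (rule sum.cong[OF refl])
      fix u
      show "(norm (transpose P *v u))\<^sup>2 = (\<Sum>j\<in>UNIV. (u \<bullet> column j P)\<^sup>2)"
        unfolding power2_norm_eq_inner
        by (simp add: inner_vec_def matrix_vector_mult_def transpose_def column_def power2_eq_square mult.commute)
    qed
    also have "\<dots> = (\<Sum>j\<in>UNIV. \<Sum>u\<in>U. (u \<bullet> column j P)\<^sup>2)" by (rule sum.swap)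
    also have "\<dots> = (\<Sum>j\<in>UNIV. column j P \<bullet> column j P)"
      using parseval[OF colP] by simp
    also have "\<dots> = (\<Sum>j\<in>UNIV. \<Sum>i\<in>UNIV. (P$i$j)^2)"
      by (simp add: inner_vec_def column_def power2_eq_square)
    also have "\<dots> = (\<Sum>i\<in>UNIV. \<Sum>j\<in>UNIV. (P$i$j)^2)" by (rule sum.swap)
    finally show ?thesis .
  qed
  finally show ?thesis using s0 cardU by (simp add: divide_right_mono)
qed



lemma frob_sq:
  fixes B :: "real^'n^'n"
  shows "sqrt (\<Sum>i\<in>UNIV. \<Sum>j\<in>UNIV. ((B ** B)$i$j)^2) \<le> (\<Sum>i\<in>UNIV. \<Sum>j\<in>UNIV. (B$i$j)^2)"
proof -
  define F where "F = (\<Sum>i\<in>UNIV. \<Sum>j\<in>UNIV. (B$i$j)^2)"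
  define a where "a i = (\<Sum>k\<in>UNIV. (B$i$k)^2)" for i
  define c where "c j = (\<Sum>k\<in>UNIV. (B$k$j)^2)" for j
  have cs: "((B ** B)$i$j)^2 \<le> a i * c j" for i j
  proof -
    have e: "(B ** B)$i$j = (\<Sum>k\<in>UNIV. B$i$k * B$k$j)" by (simp add: matrix_matrix_mult_def)
    show ?thesis unfolding e a_def c_def by (rule Cauchy_Schwarz_ineq_sum)
  qed
  have "(\<Sum>i\<in>UNIV. \<Sum>j\<in>UNIV. ((B ** B)$i$j)^2) \<le> (\<Sum>i\<in>UNIV. \<Sum>j\<in>UNIV. a i * c j)"
    by (intro sum_mono cs)
  also have "\<dots> = sum a UNIV * sum c UNIV" by (rule sum_product[symmetric])
  also have "sum a UNIV = F" unfolding a_def F_def ..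
  also have "sum c UNIV = F" unfolding c_def F_def by (rule sum.swap)
  finally have "sqrt (\<Sum>i\<in>UNIV. \<Sum>j\<in>UNIV. ((B ** B)$i$j)^2) \<le> sqrt (F * F)" by (rule real_sqrt_le_mono)
  also have "F \<ge> 0" unfolding F_def by (intro sum_nonneg) simp
  then have "sqrt (F * F) = F" by simp
  finally show ?thesis unfolding F_def .
qed

lemma frob_le_Q:
  fixes B :: "real^'n^'n" and b :: "real^'n" and \<mu> :: "'n \<Rightarrow> real"
  assumes b_def: "\<And>i. b $ i = 1 - (\<Sum>j\<in>UNIV. B $ i $ j)"
    and mu_def: "\<And>i. \<mu> i = (\<Sum>k\<in>UNIV. B $ i $ k) / real CARD('n)"
  shows "(\<Sum>i\<in>UNIV. \<Sum>j\<in>UNIV. (B$i$j)^2) \<le>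
     (\<Sum>i\<in>UNIV. \<Sum>j\<in>UNIV. (B $ i $ j - \<mu> i) ^ 2) + (\<Sum>i\<in>UNIV. (1 - b $ i) ^ 2)"
proof -
  have row: "(\<Sum>j\<in>UNIV. (B$i$j)^2) \<le> (\<Sum>j\<in>UNIV. (B $ i $ j - \<mu> i) ^ 2) + (1 - b $ i) ^ 2" for i
  proof -
    define s where "s = (\<Sum>j\<in>UNIV. B $ i $ j)"
    define n where "n = real CARD('n)"
    have n: "n \<ge> 1" unfolding n_def by simp
    have m: "\<mu> i = s / n" unfolding s_def n_def mu_def ..
    have "(\<Sum>j\<in>UNIV. (B $ i $ j - \<mu> i) ^ 2) = (\<Sum>j\<in>UNIV. (B$i$j)^2) - 2 * \<mu> i * s + n * (\<mu> i)^2"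
      unfolding s_def n_def
      by (simp add: power2_diff sum.distrib sum_subtractf sum_distrib_left sum_distrib_right algebra_simps)
    also have "\<dots> = (\<Sum>j\<in>UNIV. (B$i$j)^2) - s^2 / n" using n unfolding m by (simp add: field_simps power2_eq_square)
    finally have e: "(\<Sum>j\<in>UNIV. (B $ i $ j - \<mu> i) ^ 2) = (\<Sum>j\<in>UNIV. (B$i$j)^2) - s^2 / n" .
    have "s^2 / n \<le> s^2" using n by (simp add: divide_le_eq mult_le_cancel_left1 zero_le_power2 order_trans[OF _ mult_right_mono[OF n]])
    moreover have "(1 - b $ i) = s" unfolding s_def b_def by simp
    ultimately show ?thesis using e by simp
  qed
  show ?thesis using sum_mono[of UNIV, OF row] by (simp add: sum.distrib)
qed


lemma mat_sub_rdistrib: "(A - B) ** C = A ** C - B ** (C::real^'n^'n)"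
  by (simp add: matrix_matrix_mult_def Finite_Cartesian_Product.vec_eq_iff sum_subtractf left_diff_distrib)

lemma mat_sub_ldistrib: "C ** (A - B) = C ** A - C ** (B::real^'n^'n)"
  by (simp add: matrix_matrix_mult_def Finite_Cartesian_Product.vec_eq_iff sum_subtractf right_diff_distrib)

theorem corollary1:
  fixes B :: "real^'n^'n" and b :: "real^'n" and \<zeta> R :: real and r :: nat
    and \<mu> :: "'n \<Rightarrow> real"
  defines "n \<equiv> CARD('n)"
  assumes nonneg: "\<And>i j. B $ i $ j \<ge> 0"
    and rowsum: "\<And>i. (\<Sum>j\<in>UNIV. B $ i $ j) \<le> 1"
    and b_def: "\<And>i. b $ i = 1 - (\<Sum>j\<in>UNIV. B $ i $ j)"
    and zeta_def: "\<zeta> = real (card {(i, j). B $ i $ j > 0}) / real n ^ 2"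
    and R_def: "R = (\<Sum>k. trace (matpow B (2 * Suc k)) / (\<zeta> ^ Suc k * real n ^ Suc k))"
    and r_def: "r = rank (B ** B)"
    and mu_def: "\<And>i. \<mu> i = (\<Sum>k\<in>UNIV. B $ i $ k) / real n"
    and spec: "\<zeta> * real n > spectral_radius (B ** B)"
  shows "R \<le> sqrt (real r) *
           ((\<Sum>i\<in>UNIV. \<Sum>j\<in>UNIV. (B $ i $ j - \<mu> i) ^ 2) + (\<Sum>i\<in>UNIV. (1 - b $ i) ^ 2))
           / smallest_singular_value ((\<zeta> * real n) *\<^sub>R mat 1 - B ** B)"
proof -
  define P where "P = B ** B"
  define s where "s = \<zeta> * real n"
  define \<rho> where "\<rho> = spectral_radius P"
  have spec': "\<rho> < s" using spec unfolding \<rho>_def s_def P_def .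
  have le: "cmod l \<le> \<rho>" if "l \<in> complex_eigenvalues P" for l
    unfolding \<rho>_def Defs.spectral_radius_def using that by (intro cSup_upper ceig_bdd) auto
  have npos: "real n > 0" unfolding n_def by simp
  have s0: "s > 0"
  proof (rule ccontr)
    assume "\<not> s > 0"
    moreover have "s \<ge> 0" unfolding s_def zeta_def using npos by simp
    ultimately have "s = 0" by simp
    then have "card {(i, j). B $ i $ j > 0} = 0" unfolding s_def zeta_def using npos by simp
    then have "{(i, j). B $ i $ j > 0} = {}" by (simp add: card_eq_0_iff)
    then have "B $ i $ j = 0" for i j using nonneg[of i j] by (metis (mono_tags, lifting) case_prod_conv empty_iff mem_Collect_eq order_less_le)
    then have P0: "P = 0" unfolding P_def by (simp add: matrix_matrix_mult_def Finite_Cartesian_Product.vec_eq_iff)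
    have "0 \<in> complex_eigenvalues P" unfolding complex_eigenvalues_def P0
      by (intro CollectI exI[of _ "\<chi> i. 1"]) (auto simp: Finite_Cartesian_Product.vec_eq_iff matrix_vector_mult_def)
    from le[OF this] have "0 \<le> \<rho>" by simp
    with spec' \<open>s = 0\<close> show False by simp
  qed
  define M where "M = s *\<^sub>R mat 1 - P"
  have inj: "v = 0" if "M *v v = 0" for v
  proof (rule ccontr)
    assume v0: "v \<noteq> 0"
    have Pv: "P *v v = s *\<^sub>R v" using that unfolding M_def
      by (simp add: matrix_vector_mult_diff_rdistrib matrix_scaleR_vector_ac[symmetric] matrix_vector_mul_lid)
    define w :: "complex^'n" where "w = (\<chi> i. complex_of_real (v $ i))"
    have "w \<noteq> 0" using v0 unfolding w_def by (simp add: Finite_Cartesian_Product.vec_eq_iff)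
    moreover have "(\<chi> i j. complex_of_real (P $ i $ j)) *v w = complex_of_real s *s w"
    proof (rule Finite_Cartesian_Product.vec_eq_iff[THEN iffD2, rule_format])
      fix i
      have "(P *v v) $ i = s * v $ i" using Pv by simp
      then have "complex_of_real ((P *v v) $ i) = complex_of_real s * w $ i" unfolding w_def by simp
      then show "((\<chi> i j. complex_of_real (P $ i $ j)) *v w) $ i = (complex_of_real s *s w) $ i"
        by (simp add: matrix_vector_mult_def w_def)
    qed
    ultimately have "complex_of_real s \<in> complex_eigenvalues P" unfolding complex_eigenvalues_def by blast
    from le[OF this] s0 spec' show False by simp
  qed
  have ssvM: "smallest_singular_value M > 0" "\<And>w. smallest_singular_value M * norm w \<le> norm (M *v w)"
    using ssv_bound[of M] inj by blast+
  define \<sigma> where "\<sigma> = smallest_singular_value M"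
  have "invertible M"
    using matrix_left_invertible_ker[of M] inj invertible_left_inverse by blast
  then obtain Minv where Minv: "M ** Minv = mat 1" "Minv ** M = mat 1" unfolding invertible_def by blast
  have sMinv: "\<sigma> * norm (Minv *v u) \<le> norm u" for u
    using ssvM(2)[of "Minv *v u"] unfolding \<sigma>_def by (simp add: matrix_vector_mul_assoc Minv(1))
  define C where "C = (1/s) *\<^sub>R P"
  have Cz: "((\<lambda>k. matpow C k $ i $ j) \<longlonglongrightarrow> 0)" for i j
    unfolding C_def using powers_to_zero[OF le spec' s0] .
  have PC: "P = s *\<^sub>R C" unfolding C_def using s0 by simp
  have mB: "matpow B (2 * k) = matpow P k" for k
    by (induction k) (simp_all add: P_def matrix_mul_assoc)
  have trace_scale: "trace (c *\<^sub>R A) = c * trace A" for c and A :: "real^'n^'n"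
    by (simp add: trace_def sum_distrib_left)
  have termeq: "trace (matpow B (2 * Suc k)) / (\<zeta> ^ Suc k * real n ^ Suc k) = trace (matpow C (Suc k))" for k
  proof -
    have "matpow C (Suc k) = (1/s) ^ Suc k *\<^sub>R matpow P (Suc k)" unfolding C_def by (rule matpow_scale)
    moreover have "(1/s) ^ Suc k = 1 / (\<zeta> ^ Suc k * real n ^ Suc k)"
      unfolding s_def by (simp add: power_mult_distrib power_one_over)
    moreover have "matpow B (2 * Suc k) = matpow P (Suc k)" by (rule mB)
    ultimately show ?thesis by (simp only: trace_scale) (simp add: divide_inverse mult.commute)
  qed
  have partial: "M ** (\<Sum>k<N. matpow C (Suc k)) = P - s *\<^sub>R matpow C (Suc N)" for N
  proof (induction N)
    case 0 then show ?case using PC by simp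
  next
    case (Suc N)
    have "M ** (\<Sum>k<Suc N. matpow C (Suc k)) = M ** (\<Sum>k<N. matpow C (Suc k)) + M ** matpow C (Suc N)"
      by (simp add: matrix_add_ldistrib)
    also have "M ** matpow C (Suc N) = s *\<^sub>R matpow C (Suc N) - s *\<^sub>R matpow C (Suc (Suc N))"
      unfolding M_def PC by (simp add: mat_sub_rdistrib scalar_matrix_assoc[symmetric] matrix_mul_lid)
    finally show ?case using Suc.IH by simp
  qed
  have trace_sum: "trace (\<Sum>k<N. A k) = (\<Sum>k<N. trace (A k))" for N and A :: "nat \<Rightarrow> real^'n^'n"
    by (induction N) (simp_all add: trace_add trace_def sum.distrib)
  have psum: "(\<Sum>k<N. trace (matpow C (Suc k))) = trace (Minv ** P) - s * trace (Minv ** matpow C (Suc N))" for N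
  proof -
    have "(\<Sum>k<N. matpow C (Suc k)) = Minv ** (M ** (\<Sum>k<N. matpow C (Suc k)))"
      by (simp add: matrix_mul_assoc Minv(2) matrix_mul_lid)
    also have "\<dots> = Minv ** P - s *\<^sub>R (Minv ** matpow C (Suc N))"
      unfolding partial by (simp only: mat_sub_ldistrib matrix_scalar_ac scalar_matrix_assoc[symmetric])
    finally show ?thesis by (simp add: trace_sum[symmetric] trace_sub trace_scale)
  qed
  have tz: "(\<lambda>N. trace (Minv ** matpow C (Suc N))) \<longlonglongrightarrow> 0"
    unfolding trace_def matrix_matrix_mult_def
    by (simp del: matpow.simps, intro tendsto_null_sum tendsto_mult_right_zero LIMSEQ_Suc Cz)
  have "(\<lambda>k. trace (matpow C (Suc k))) sums trace (Minv ** P)"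
    unfolding sums_def psum using tendsto_diff[OF tendsto_const tendsto_mult_right_zero[OF tz]] by simp
  then have Req: "R = trace (Minv ** P)" unfolding R_def termeq by (rule sums_unique[symmetric])
  define Q where "Q = (\<Sum>i\<in>UNIV. \<Sum>j\<in>UNIV. (B $ i $ j - \<mu> i) ^ 2) + (\<Sum>i\<in>UNIV. (1 - b $ i) ^ 2)"
  have "R \<le> sqrt (real (rank P)) * sqrt (\<Sum>i\<in>UNIV. \<Sum>j\<in>UNIV. (P$i$j)^2) / \<sigma>"
    unfolding Req using trace_bound[of \<sigma> Minv P] ssvM(1) sMinv unfolding \<sigma>_def by blast
  also have "\<dots> \<le> sqrt (real (rank P)) * Q / \<sigma>"
  proof (intro divide_right_mono mult_left_mono)
    show "sqrt (\<Sum>i\<in>UNIV. \<Sum>j\<in>UNIV. (P$i$j)^2) \<le> Q"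
      unfolding P_def Q_def using frob_sq[of B] frob_le_Q[OF b_def mu_def[unfolded n_def]] by linarith
  qed (use ssvM(1) \<sigma>_def in auto)
  finally show ?thesis unfolding Q_def \<sigma>_def M_def s_def P_def r_def .
qed

end
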